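(* Let $(X,\mathcal{A})$ be a cross resolvable design with $v$ points, $b$ blocks of size $k$, $r$ parallel classes and $b_r=b/r$ blocks per parallel class, and let $z\in\{2,\dots,r\}$ be such that $\mu_z$ exists. Consider the multi-access coded caching scheme built from it (described in the context). Then for every point $x\in X$, the number of users having access to subfile index $x$ (i.e., users $U_H$ with $x\in\bigcup_{B\in H}B$) is exactly $\binom{r}{z}\left(b_r^z-(b_r-1)^z\right)$.
   Context: A resolvable design $(X,\mathcal{A})$: $X$ a finite set of $v$ points, $\mathcal{A}$ a collection of $b$ blocks (subsets of $X$) each of size $k$, partitioned into $r$ parallel classes, each parallel class being a set of $b_r=b/r=v/k$ pairwise disjoint blocks whose union is $X$. The $z$-th cross intersection number $\mu_z$ exists if $|B_1\cap\cdots\cap B_z|$ equals the same nonzero value $\mu_z$ for every choice of blocks from $z$ distinct parallel classes; the design is cross resolvable if some $\mu_i$, $i\in\{2,\dots,r\}$, exists. Multi-access scheme: there are $b$ caches, one for each block; there are $K=\binom{r}{z}b_r^z$ users $U_H$, one for each set $H$ of $z$ blocks taken from $z$ distinct parallel classes, and user $U_H$ is connected to the $z$ caches corresponding to the blocks in $H$. Each of $N$ files $W_i$ is split into $v$ equal subfiles $W_{i,x}$, $x\in X$, and the cache of block $A_j$ stores $W_{i,x}$ for all $x\in A_j$ and all $i\in[N]$. A user has access to subfile index $x$ if $x$ lies in one of the blocks of the caches it is connected to. *)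

theory Defs
  imports Main "HOL-Library.FuncSet"
begin

text \<open>Blocks are indexed by (class, block), so
  repeated blocks in different classes are allowed.\<close>
definition resolvable_design :: "'a set \<Rightarrow> nat \<Rightarrow> nat \<Rightarrow> (nat \<Rightarrow> 'a set set) \<Rightarrow> bool" where
  "resolvable_design X k r P \<longleftrightarrow>
     finite X \<and> X \<noteq> {} \<and> k > 0 \<and> r \<ge> 1 \<and>
     (\<forall>i<r. (\<forall>B\<in>P i. B \<subseteq> X \<and> card B = k) \<and>
            (\<forall>B\<in>P i. \<forall>B'\<in>P i. B \<noteq> B' \<longrightarrow> B \<inter> B' = {}) \<and>
            \<Union>(P i) = X)"

definition blocks_per_class :: "'a set \<Rightarrow> nat \<Rightarrow> nat" where
  "blocks_per_class X k = card X div k"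

definition cross_choices :: "nat \<Rightarrow> (nat \<Rightarrow> 'a set set) \<Rightarrow> nat \<Rightarrow> (nat set \<times> (nat \<Rightarrow> 'a set)) set" where
  "cross_choices r P z = {(S, f). S \<subseteq> {..<r} \<and> card S = z \<and> f \<in> (\<Pi>\<^sub>E i\<in>S. P i)}"

definition cross_intersection_number :: "nat \<Rightarrow> (nat \<Rightarrow> 'a set set) \<Rightarrow> nat \<Rightarrow> nat \<Rightarrow> bool" where
  "cross_intersection_number r P z mu \<longleftrightarrow> mu > 0 \<and>
     (\<forall>(S, f) \<in> cross_choices r P z. card (\<Inter>i\<in>S. f i) = mu)"

definition mu_exists :: "nat \<Rightarrow> (nat \<Rightarrow> 'a set set) \<Rightarrow> nat \<Rightarrow> bool" where
  "mu_exists r P z \<longleftrightarrow> (\<exists>mu. cross_intersection_number r P z mu)"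

definition cross_resolvable_design :: "'a set \<Rightarrow> nat \<Rightarrow> nat \<Rightarrow> (nat \<Rightarrow> 'a set set) \<Rightarrow> bool" where
  "cross_resolvable_design X k r P \<longleftrightarrow> resolvable_design X k r P \<and>
     (\<exists>i\<in>{2..r}. mu_exists r P i)"

text \<open>Users of the multi-access scheme: one user U_H per choice H of z blocks from
  z distinct classes; user U_H has access to subfile index x iff x lies in a block of H.\<close>
definition users_accessing :: "nat \<Rightarrow> (nat \<Rightarrow> 'a set set) \<Rightarrow> nat \<Rightarrow> 'a \<Rightarrow> (nat set \<times> (nat \<Rightarrow> 'a set)) set" where
  "users_accessing r P z x = {(S, f) \<in> cross_choices r P z. x \<in> (\<Union>i\<in>S. f i)}"

end

theory Submission
  imports Defs
begin

lemma class_facts: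
  assumes "resolvable_design X k r P" "i < r" "x \<in> X"
  shows "finite (P i)" "card (P i) = blocks_per_class X k"
        "card (P i - {B. x \<in> B}) = blocks_per_class X k - 1"
proof -
  have fX: "finite X" and kp: "k > 0" and sub: "\<forall>B\<in>P i. B \<subseteq> X \<and> card B = k"
    and dis: "\<forall>B\<in>P i. \<forall>B'\<in>P i. B \<noteq> B' \<longrightarrow> B \<inter> B' = {}" and un: "\<Union>(P i) = X"
    using assms unfolding resolvable_design_def by auto
  have "P i \<subseteq> Pow X" using sub by auto
  then show fin: "finite (P i)" using fX finite_Pow_iff finite_subset by metis
  have fB: "\<forall>B\<in>P i. finite B" using sub fX finite_subset by metis
  have "card X = card (\<Union>(P i))" using un by simp
  also have "\<dots> = sum card (P i)"
    by (rule card_Union_disjoint) (use fB dis in \<open>auto simp: pairwise_def disjnt_def\<close>)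
  also have "\<dots> = card (P i) * k" using sub by simp
  finally have "card X = card (P i) * k" .
  then show cb: "card (P i) = blocks_per_class X k" unfolding blocks_per_class_def using kp by simp
  obtain B0 where B0: "B0 \<in> P i" "x \<in> B0" using un assms(3) by auto
  have "P i \<inter> {B. x \<in> B} = {B0}" using B0 dis by blast
  hence "P i - {B. x \<in> B} = P i - {B0}" by blast
  then show "card (P i - {B. x \<in> B}) = blocks_per_class X k - 1"
    using fin B0 cb by simp
qed

theorem lemma2:
  fixes X :: "'a set" and k r z :: nat and P :: "nat \<Rightarrow> 'a set set" and x :: 'a
  assumes "cross_resolvable_design X k r P"
    and "z \<in> {2..r}"
    and "mu_exists r P z"
    and "x \<in> X"
  shows "card (users_accessing r P z x) =
           (r choose z) * (blocks_per_class X k ^ z - (blocks_per_class X k - 1) ^ z)"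
proof -
  let ?b = "blocks_per_class X k"
  let ?SS = "{S. S \<subseteq> {..<r} \<and> card S = z}"
  let ?F = "\<lambda>S. {f \<in> PiE S P. x \<in> (\<Union>i\<in>S. f i)}"
  have rd: "resolvable_design X k r P" using assms(1) unfolding cross_resolvable_design_def by simp
  have eq: "users_accessing r P z x = Sigma ?SS ?F"
    unfolding users_accessing_def cross_choices_def by auto
  have per: "card (?F S) = ?b ^ z - (?b - 1) ^ z" if S: "S \<in> ?SS" for S
  proof -
    have fS: "finite S" using S finite_subset by blast
    have ir: "\<And>i. i \<in> S \<Longrightarrow> i < r" using S by auto
    have "?F S = PiE S P - PiE S (\<lambda>i. P i - {B. x \<in> B})"
      by (auto simp: PiE_iff extensional_def)
    moreover have "PiE S (\<lambda>i. P i - {B. x \<in> B}) \<subseteq> PiE S P" by (auto simp: PiE_iff)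
    moreover have "finite (PiE S (\<lambda>i. P i - {B. x \<in> B}))"
      using fS class_facts(1)[OF rd ir assms(4)] by (intro finite_PiE) auto
    ultimately have "card (?F S) = card (PiE S P) - card (PiE S (\<lambda>i. P i - {B. x \<in> B}))"
      by (simp add: card_Diff_subset)
    also have "card (PiE S P) = ?b ^ z"
      using fS S class_facts(2)[OF rd ir assms(4)] by (simp add: card_PiE)
    also have "card (PiE S (\<lambda>i. P i - {B. x \<in> B})) = (?b - 1) ^ z"
      using fS S class_facts(3)[OF rd ir assms(4)] by (simp add: card_PiE)
    finally show ?thesis .
  qed
  have fSS: "finite ?SS" by (rule finite_subset[of _ "Pow {..<r}"]) auto
  have fF: "\<forall>S\<in>?SS. finite (?F S)"
  proof
    fix S assume S: "S \<in> ?SS"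
    have ir: "\<And>i. i \<in> S \<Longrightarrow> i < r" using S by auto
    have "finite (PiE S P)" using S finite_subset[of S "{..<r}"] class_facts(1)[OF rd ir assms(4)]
      by (intro finite_PiE) auto
    then show "finite (?F S)" by simp
  qed
  have "card (Sigma ?SS ?F) = (\<Sum>S\<in>?SS. card (?F S))"
    using fSS fF by (simp add: card_SigmaI)
  also have "\<dots> = (\<Sum>S\<in>?SS. ?b ^ z - (?b - 1) ^ z)" using per by simp
  also have "\<dots> = card ?SS * (?b ^ z - (?b - 1) ^ z)" by simp
  also have "card ?SS = r choose z" using n_subsets[of "{..<r}" z] by simp
  finally show ?thesis using eq by simp
qed

end
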